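(* Let $\mathbf{C}\in\mathbb{R}^{n\times n}$, let $\mathbf{X}=\mathbf{C}^\top\mathbf{C}$, and let $\Pi$ be any participation schema. For $\pi\in\Pi$, let $\mathbf{P}_\pi$ be the diagonal $0/1$ matrix with $\mathbf{P}_\pi[i,i]=1$ if and only if $i\in\pi$. Then the squared sensitivity satisfies $$\mathrm{sens}_\Pi(\mathbf{C})^2=\max_{\pi\in\Pi}\ \sup_{\mathbf{u}\in\mathfrak{D}}\ \mathrm{tr}\big([\mathbf{P}_\pi\mathbf{C}^\top\mathbf{C}\mathbf{P}_\pi][\mathbf{u}\mathbf{u}^\top]\big).$$ Moreover, since every $\mathbf{u}\in\mathfrak{D}$ has rows of $\ell_2$ norm at most $1$, $$\mathrm{sens}_\Pi(\mathbf{C})^2\le\max_{\pi\in\Pi}\sum_{i,j\in\pi}|\mathbf{X}_{[i,j]}|.$$ This upper bound holds with equality whenever $\mathbf{P}_\pi\mathbf{C}^\top\mathbf{C}\mathbf{P}_\pi$ is entrywise nonnegative for all $\pi\in\Pi$. These statements hold independently of the row dimension $d$.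
   Context: A participation schema $\Pi$ is a set of subsets $\pi\subseteq[n]=\{1,\dots,n\}$ (the sets of steps in which one example may participate). $\mathfrak{D}$ is the set of all $\mathbf{u}\in\mathbb{R}^{n\times d}$ whose rows have $\ell_2$ norm at most $1$ and whose nonzero-row indices are contained in some $\pi\in\Pi$. The sensitivity of $\mathbf{C}$ is $\mathrm{sens}_\Pi(\mathbf{C})=\sup_{\mathbf{u}\in\mathfrak{D}}\|\mathbf{C}\mathbf{u}\|_F$. *)

theory Defs
  imports "HOL-Analysis.Analysis"
begin

text \<open>Steps [n] are modelled by the finite type 'n; the row dimension d by the finite type 'd.
  A matrix in R^(n x d) is a value of type real^'d^'n (row i is u $ i).\<close>

definition frob_norm :: "real^'d^'n \<Rightarrow> real" where
  "frob_norm A = sqrt (\<Sum>i\<in>UNIV. \<Sum>j\<in>UNIV. (A $ i $ j)^2)"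

definition adm :: "'n set set \<Rightarrow> (real^'d^'n) set" where
  "adm Sch = {u. (\<forall>i. norm (u $ i) \<le> 1) \<and> (\<exists>p\<in>Sch. {i. u $ i \<noteq> 0} \<subseteq> p)}"

definition sens :: "'d::finite itself \<Rightarrow> ('n::finite) set set \<Rightarrow> real^'n^'n \<Rightarrow> real" where
  "sens _ Sch C = Sup ((\<lambda>u::real^'d^'n. frob_norm (C ** u)) ` adm Sch)"

definition proj_mat :: "'n set \<Rightarrow> real^'n^'n" where
  "proj_mat p = (\<chi> i j. if i = j \<and> i \<in> p then 1 else 0)"

end

theory Submission imports Defs begin

lemma swap4:
  fixes f :: "'a \<Rightarrow> 'b \<Rightarrow> 'c \<Rightarrow> 'e \<Rightarrow> real"
  assumes "finite A" "finite B" "finite C" "finite D"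
  shows "(\<Sum>r\<in>A. \<Sum>l\<in>B. \<Sum>i\<in>C. \<Sum>j\<in>D. f r l i j) = (\<Sum>i\<in>C. \<Sum>j\<in>D. \<Sum>r\<in>A. \<Sum>l\<in>B. f r l i j)"
proof -
  have "(\<Sum>r\<in>A. \<Sum>l\<in>B. \<Sum>i\<in>C. \<Sum>j\<in>D. f r l i j) = (\<Sum>r\<in>A. \<Sum>i\<in>C. \<Sum>l\<in>B. \<Sum>j\<in>D. f r l i j)"
    by (rule sum.cong[OF refl], rule sum.swap)
  also have "\<dots> = (\<Sum>r\<in>A. \<Sum>i\<in>C. \<Sum>j\<in>D. \<Sum>l\<in>B. f r l i j)"
    by (rule sum.cong[OF refl], rule sum.cong[OF refl], rule sum.swap)
  also have "\<dots> = (\<Sum>i\<in>C. \<Sum>r\<in>A. \<Sum>j\<in>D. \<Sum>l\<in>B. f r l i j)"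
    by (rule sum.swap)
  also have "\<dots> = (\<Sum>i\<in>C. \<Sum>j\<in>D. \<Sum>r\<in>A. \<Sum>l\<in>B. f r l i j)"
    by (rule sum.cong[OF refl], rule sum.swap)
  finally show ?thesis .
qed

lemma frob_sq:
  fixes C :: "real^'n^'n" and u :: "real^'d^'n"
  shows "frob_norm (C ** u)^2 = (\<Sum>i\<in>UNIV. \<Sum>j\<in>UNIV. (transpose C ** C)$i$j * (u$i \<bullet> u$j))"
proof -
  have "frob_norm (C ** u)^2 = (\<Sum>r\<in>UNIV. \<Sum>l\<in>UNIV. ((C ** u) $ r $ l)^2)"
    unfolding frob_norm_def by (simp add: sum_nonneg)
  also have "\<dots> = (\<Sum>r\<in>UNIV. \<Sum>l\<in>UNIV. \<Sum>i\<in>UNIV. \<Sum>j\<in>UNIV. C$r$i * C$r$j * (u$i$l * u$j$l))"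
    by (simp add: matrix_matrix_mult_def power2_eq_square sum_product algebra_simps)
  also have "\<dots> = (\<Sum>i\<in>UNIV. \<Sum>j\<in>UNIV. \<Sum>r\<in>UNIV. \<Sum>l\<in>UNIV. C$r$i * C$r$j * (u$i$l * u$j$l))"
    by (rule swap4) auto
  also have "\<dots> = (\<Sum>i\<in>UNIV. \<Sum>j\<in>UNIV. (transpose C ** C)$i$j * (u$i \<bullet> u$j))"
    by (simp add: matrix_matrix_mult_def transpose_def inner_vec_def sum_product)
  finally show ?thesis .
qed

lemma trace_uu:
  fixes M :: "real^'n^'n" and u :: "real^'d^'n"
  shows "trace (M ** (u ** transpose u)) = (\<Sum>i\<in>UNIV. \<Sum>j\<in>UNIV. M$i$j * (u$j \<bullet> u$i))"
  by (simp add: trace_def matrix_matrix_mult_def transpose_def inner_vec_def sum_distrib_left)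

lemma delta_conj: "(\<Sum>k\<in>(UNIV::'n::finite set). if k = j \<and> k \<in> p then (a k::real) else 0) = (if j \<in> p then a j else 0)"
proof (cases "j \<in> p")
  case True
  then have "(\<Sum>k\<in>UNIV. if k = j \<and> k \<in> p then (a k::real) else 0) = (\<Sum>k\<in>UNIV. if k = j then a k else 0)"
    by (intro sum.cong) auto
  then show ?thesis using True by simp
next
  case False
  then show ?thesis by (auto intro: sum.neutral)
qed

lemma proj_left: "proj_mat p ** (A::real^'m^'n) = (\<chi> i j. if i \<in> p then A$i$j else 0)"
proof -
  have "(\<Sum>k\<in>UNIV. (if i = k \<and> i \<in> p then 1 else 0) * A$k$j) = (if i \<in> p then A$i$j else 0)" for i j
  proof -
    have "(\<Sum>k\<in>UNIV. (if i = k \<and> i \<in> p then 1 else 0) * A$k$j) = (\<Sum>k\<in>UNIV. if k = i \<and> k \<in> p then A$k$j else 0)"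
      by (intro sum.cong) auto
    then show ?thesis by (simp only: delta_conj)
  qed
  then show ?thesis unfolding proj_mat_def matrix_matrix_mult_def vec_eq_iff by simp
qed

lemma proj_right: "(A::real^'n^'m) ** proj_mat p = (\<chi> i j. if j \<in> p then A$i$j else 0)"
proof -
  have "(\<Sum>k\<in>UNIV. A$i$k * (if k = j \<and> k \<in> p then 1 else 0)) = (if j \<in> p then A$i$j else 0)" for i j
  proof -
    have "(\<Sum>k\<in>UNIV. A$i$k * (if k = j \<and> k \<in> p then 1 else 0)) = (\<Sum>k\<in>UNIV. if k = j \<and> k \<in> p then A$i$k else 0)"
      by (intro sum.cong) auto
    then show ?thesis by (simp only: delta_conj)
  qed
  then show ?thesis unfolding proj_mat_def matrix_matrix_mult_def vec_eq_iff by simp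
qed


lemma proj_vec: "(proj_mat p ** (u::real^'d^'n)) $ i = (if i \<in> p then u $ i else 0)"
  by (simp add: proj_left vec_eq_iff)

lemma PXP_entry:
  fixes C :: "real^'n^'n"
  shows "(proj_mat p ** transpose C ** C ** proj_mat p) $ i $ j
     = (if i \<in> p \<and> j \<in> p then (transpose C ** C) $ i $ j else 0)"
proof -
  have "proj_mat p ** transpose C ** C = proj_mat p ** (transpose C ** C)"
    by (simp add: matrix_mul_assoc)
  then show ?thesis by (simp add: proj_left proj_right)
qed

lemma trace_eq:
  fixes C :: "real^'n^'n" and u :: "real^'d^'n"
  shows "trace ((proj_mat p ** transpose C ** C ** proj_mat p) ** (u ** transpose u))
     = frob_norm (C ** (proj_mat p ** u))^2"
proof -
  have "(if i \<in> p \<and> j \<in> p then (transpose C ** C) $ i $ j else 0) * (u $ j \<bullet> u $ i)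
     = (transpose C ** C) $ i $ j * ((if i \<in> p then u $ i else 0) \<bullet> (if j \<in> p then u $ j else 0))" for i j
    by (cases "i \<in> p"; cases "j \<in> p") (simp_all add: inner_commute)
  then show ?thesis unfolding trace_uu frob_sq PXP_entry proj_vec by simp
qed

lemma sum_restrict2:
  fixes g :: "'n::finite \<Rightarrow> 'n \<Rightarrow> real"
  shows "(\<Sum>i\<in>UNIV. \<Sum>j\<in>UNIV. if i \<in> p then if j \<in> p then g i j else 0 else 0) = (\<Sum>i\<in>p. \<Sum>j\<in>p. g i j)"
proof -
  have "(\<Sum>i\<in>UNIV. \<Sum>j\<in>UNIV. if i \<in> p then if j \<in> p then g i j else 0 else 0)
      = (\<Sum>i\<in>UNIV. if i \<in> p then (\<Sum>j\<in>UNIV. if j \<in> p then g i j else 0) else 0)"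
    by (intro sum.cong refl) auto
  also have "\<dots> = (\<Sum>i\<in>p. (\<Sum>j\<in>UNIV. if j \<in> p then g i j else 0))"
    using sum.inter_restrict[of UNIV "\<lambda>i. (\<Sum>j\<in>UNIV. if j \<in> p then g i j else 0)" p] by simp
  also have "\<dots> = (\<Sum>i\<in>p. \<Sum>j\<in>p. g i j)"
    using sum.inter_restrict[of UNIV "g i" p for i] by simp
  finally show ?thesis .
qed

lemma frob_bound:
  fixes C :: "real^'n^'n" and u :: "real^'d^'n"
  assumes "\<And>i. norm (u $ i) \<le> 1" "{i. u $ i \<noteq> 0} \<subseteq> p"
  shows "frob_norm (C ** u)^2 \<le> (\<Sum>i\<in>p. \<Sum>j\<in>p. \<bar>(transpose C ** C) $ i $ j\<bar>)"
proof -
  let ?X = "transpose C ** C"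
  have t: "?X $ i $ j * (u$i \<bullet> u$j) \<le> (if i \<in> p then if j \<in> p then \<bar>?X $ i $ j\<bar> else 0 else 0)" for i j
  proof (cases "i \<in> p \<and> j \<in> p")
    case True
    have "\<bar>u$i \<bullet> u$j\<bar> \<le> norm (u$i) * norm (u$j)" by (rule Cauchy_Schwarz_ineq2)
    also have "\<dots> \<le> 1" using assms(1)[of i] assms(1)[of j] by (simp add: mult_le_one)
    finally have "\<bar>u$i \<bullet> u$j\<bar> \<le> 1" .
    then have "\<bar>?X $ i $ j\<bar> * \<bar>u$i \<bullet> u$j\<bar> \<le> \<bar>?X $ i $ j\<bar> * 1"
      by (intro mult_left_mono) auto
    moreover have "?X $ i $ j * (u$i \<bullet> u$j) \<le> \<bar>?X $ i $ j\<bar> * \<bar>u$i \<bullet> u$j\<bar>"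
      by (simp only: abs_mult[symmetric] abs_ge_self)
    ultimately have "?X $ i $ j * (u$i \<bullet> u$j) \<le> \<bar>?X $ i $ j\<bar> * 1"
      by (rule order_trans[rotated])
    then show ?thesis using True by simp
  next
    case False
    then have "u$i = 0 \<or> u$j = 0" using assms(2) by auto
    then show ?thesis using False by auto
  qed
  have "frob_norm (C ** u)^2 \<le> (\<Sum>i\<in>UNIV. \<Sum>j\<in>UNIV. if i \<in> p then if j \<in> p then \<bar>?X $ i $ j\<bar> else 0 else 0)"
    unfolding frob_sq by (intro sum_mono t)
  then show ?thesis by (simp only: sum_restrict2)
qed

lemma frob_nonneg: "frob_norm A \<ge> 0"
  unfolding frob_norm_def by (simp add: sum_nonneg)

lemma proj_adm: "u \<in> adm Sch \<Longrightarrow> proj_mat p ** u \<in> adm Sch"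
  unfolding adm_def by (auto simp: proj_vec)

lemma proj_id: "{i. u $ i \<noteq> 0} \<subseteq> p \<Longrightarrow> proj_mat p ** u = (u::real^'d^'n)"
  unfolding vec_eq_iff proj_vec by auto


theorem proposition3:
  fixes C :: "real^'n^'n" and Sch :: "'n set set"
  assumes "Sch \<noteq> {}"
  defines "X \<equiv> transpose C ** C"
  shows "(sens TYPE('d::finite) Sch C)^2 =
           Max ((\<lambda>p. Sup ((\<lambda>u::real^'d^'n.
              trace ((proj_mat p ** transpose C ** C ** proj_mat p) ** (u ** transpose u))) ` adm Sch)) ` Sch)
     \<and> (sens TYPE('d) Sch C)^2 \<le> Max ((\<lambda>p. \<Sum>i\<in>p. \<Sum>j\<in>p. \<bar>X $ i $ j\<bar>) ` Sch)
     \<and> ((\<forall>p\<in>Sch. \<forall>i j. (proj_mat p ** transpose C ** C ** proj_mat p) $ i $ j \<ge> 0) \<longrightarrow>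
         (sens TYPE('d) Sch C)^2 = Max ((\<lambda>p. \<Sum>i\<in>p. \<Sum>j\<in>p. \<bar>X $ i $ j\<bar>) ` Sch))"
proof -
  define s where "s = sens TYPE('d) Sch C"
  define S where "S = (\<lambda>u::real^'d^'n. frob_norm (C ** u)) ` adm Sch"
  define Mx where "Mx = Max ((\<lambda>p. \<Sum>i\<in>p. \<Sum>j\<in>p. \<bar>X $ i $ j\<bar>) ` Sch)"
  define T where "T = (\<lambda>p. (\<lambda>u::real^'d^'n.
              trace ((proj_mat p ** transpose C ** C ** proj_mat p) ** (u ** transpose u))) ` adm Sch)"
  define Mf where "Mf = Max ((\<lambda>p. Sup (T p)) ` Sch)"
  have sS: "s = Sup S" unfolding s_def S_def sens_def ..
  have finSch: "finite Sch" by (rule finite_subset[of _ UNIV]) auto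
  obtain p0 where p0: "p0 \<in> Sch" using assms(1) by auto
  have zero_adm: "(0::real^'d^'n) \<in> adm Sch" unfolding adm_def using p0 by auto
  have Sne: "S \<noteq> {}" unfolding S_def using zero_adm by auto
  have B1: "frob_norm (C ** u)^2 \<le> Mx" if "u \<in> adm Sch" for u :: "real^'d^'n"
  proof -
    have nu: "\<And>i. norm (u $ i) \<le> 1" and ex: "\<exists>p\<in>Sch. {i. u $ i \<noteq> 0} \<subseteq> p"
      using that unfolding adm_def by auto
    obtain p where p: "p \<in> Sch" "{i. u $ i \<noteq> 0} \<subseteq> p" "\<And>i. norm (u $ i) \<le> 1"
      using ex nu by blast
    have "frob_norm (C ** u)^2 \<le> (\<Sum>i\<in>p. \<Sum>j\<in>p. \<bar>X $ i $ j\<bar>)"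
      unfolding X_def by (rule frob_bound) (use p in auto)
    also have "\<dots> \<le> Mx" unfolding Mx_def using p(1) finSch by (intro Max_ge) auto
    finally show ?thesis .
  qed
  have Mx0: "0 \<le> Mx" using B1[OF zero_adm] by (smt (verit) zero_le_power2)
  have bddS: "bdd_above S"
    unfolding S_def bdd_above_def
    by (rule exI[of _ "sqrt Mx"]) (auto intro: real_le_rsqrt B1)
  have upper: "frob_norm (C ** u) \<le> s" if "u \<in> adm Sch" for u :: "real^'d^'n"
    unfolding sS using that bddS by (intro cSup_upper) (auto simp: S_def)
  have s0: "0 \<le> s" by (rule order_trans[OF frob_nonneg upper[OF zero_adm]])
  have "s \<le> sqrt Mx" unfolding sS using Sne
    by (intro cSup_least) (auto simp: S_def intro: real_le_rsqrt B1)
  then have part2: "s^2 \<le> Mx" using s0 Mx0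
    by (metis power_mono real_sqrt_pow2)
  have Tle: "t \<le> s^2" if tT: "t \<in> T p" for p t
  proof -
    obtain u :: "real^'d^'n" where u0: "u \<in> adm Sch"
      "t = trace ((proj_mat p ** transpose C ** C ** proj_mat p) ** (u ** transpose u))"
      using tT unfolding T_def by blast
    then have u: "u \<in> adm Sch" "t = frob_norm (C ** (proj_mat p ** u))^2"
      by (simp_all add: trace_eq)
    have "frob_norm (C ** (proj_mat p ** u)) \<le> s" by (rule upper[OF proj_adm[OF u(1)]])
    then show ?thesis unfolding u(2) by (rule power_mono[OF _ frob_nonneg])
  qed
  have Tne: "T p \<noteq> {}" for p unfolding T_def using zero_adm by auto
  have bddT: "bdd_above (T p)" for p unfolding bdd_above_def using Tle by blast
  have fle: "Sup (T p) \<le> s^2" for p by (rule cSup_least[OF Tne Tle])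
  have Mf_le: "Mf \<le> s^2" unfolding Mf_def using finSch assms(1) fle by (auto intro: Max.boundedI)
  have B2: "frob_norm (C ** u)^2 \<le> Mf" if uA: "u \<in> adm Sch" for u :: "real^'d^'n"
  proof -
    obtain p where p: "p \<in> Sch" "{i. u $ i \<noteq> 0} \<subseteq> p"
      using uA unfolding adm_def by auto
    have "frob_norm (C ** u)^2 = trace ((proj_mat p ** transpose C ** C ** proj_mat p) ** (u ** transpose u))"
      by (simp add: trace_eq proj_id[OF p(2)])
    also have "\<dots> \<le> Sup (T p)" using uA bddT by (intro cSup_upper) (auto simp: T_def)
    also have "\<dots> \<le> Mf" unfolding Mf_def using p(1) finSch by (intro Max_ge) auto
    finally show ?thesis .
  qed
  have Mf0: "0 \<le> Mf" using B2[OF zero_adm] by (smt (verit) zero_le_power2)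
  have "s \<le> sqrt Mf" unfolding sS using Sne
    by (intro cSup_least) (auto simp: S_def intro: real_le_rsqrt B2)
  then have "s^2 \<le> Mf" using s0 Mf0 by (metis power_mono real_sqrt_pow2)
  with Mf_le have part1: "s^2 = Mf" by linarith
  have part3: "s^2 = Mx" if nn: "\<forall>p\<in>Sch. \<forall>i j. (proj_mat p ** transpose C ** C ** proj_mat p) $ i $ j \<ge> 0"
  proof -
    have "(\<Sum>i\<in>p. \<Sum>j\<in>p. \<bar>X $ i $ j\<bar>) \<le> s^2" if p: "p \<in> Sch" for p
    proof -
      define u :: "real^'d^'n" where "u = (\<chi> i. if i \<in> p then axis undefined 1 else 0)"
      have uadm: "u \<in> adm Sch" unfolding adm_def u_def using p by auto
      have t: "X $ i $ j * (u$i \<bullet> u$j) = (if i \<in> p then if j \<in> p then \<bar>X $ i $ j\<bar> else 0 else 0)" for i j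
      proof (cases "i \<in> p \<and> j \<in> p")
        case True
        have "0 \<le> (proj_mat p ** transpose C ** C ** proj_mat p) $ i $ j" using nn p by blast
        then have "X $ i $ j \<ge> 0" using True unfolding X_def PXP_entry by simp
        then show ?thesis using True by (simp add: u_def inner_axis_axis)
      next
        case False
        then show ?thesis by (auto simp: u_def)
      qed
      have "frob_norm (C ** u)^2 = (\<Sum>i\<in>p. \<Sum>j\<in>p. \<bar>X $ i $ j\<bar>)"
        unfolding frob_sq X_def[symmetric] t by (rule sum_restrict2)
      moreover have "frob_norm (C ** u) \<le> s" by (rule upper[OF uadm])
      ultimately show ?thesis by (metis power_mono frob_nonneg)
    qed
    then have "Mx \<le> s^2" unfolding Mx_def using finSch assms(1) by (auto intro: Max.boundedI)
    with part2 show ?thesis by linarith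
  qed
  show ?thesis using part1 part2 part3 unfolding s_def Mf_def T_def Mx_def by blast
qed

end
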